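(* In the two-unicast setting, suppose $k_{1-2}+k_{2-1}\ge\min(k_{12-1},k_{12-2})$ and $k_{2-1}\le k_{2-2}$. Set $R_2^{**}=k_{2-1}$ and $R_1^{**}=\min(k_{12-1},k_{12-2})-k_{2-1}$. Let the field $GF(q)$ and the local coding coefficients at the non-source nodes be fixed so that $\mathrm{rank}(H_{ij})=k_{j-i}$ and $\mathrm{rank}([H_{i1}~H_{i2}])=k_{12-i}$ for $i,j\in\{1,2\}$, and let $M_1$ ($k_{1-12}\times R_1^{**}$) and $M_2$ ($k_{2-12}\times R_2^{**}$) be full column rank source encoding matrices such that $[H_{i1}M_1~~H_{i2}M_2]$ has full column rank $R_1^{**}+R_2^{**}$ for $i=1,2$. Then every pair of nonnegative integers $(R_1,R_2)$ with $$R_1\le\min(k_{12-1},k_{12-2})-k_{2-1},\qquad R_2\le k_{2-2},\qquad R_1+R_2\le\mathrm{rank}([H_{21}M_1~~H_{22}])$$ is achievable.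
   Context: $G=(V,E)$ is a directed acyclic network with unit-capacity edges (each carrying one symbol of $GF(q)$ per use), sources $s_1,s_2$ (no incoming edges), terminals $t_1,t_2$ (no outgoing edges); $t_i$ wants the message of $s_i$. $k_{N_1-N_2}$ is the min-cut from $\{s_i:i\in N_1\}$ to $\{t_j:j\in N_2\}$. W.l.o.g. $s_i$ has exactly $k_{i-12}$ outgoing edges and $t_i$ has exactly $k_{12-i}$ incoming edges. For a linear network code over $GF(q)$ with fixed local coefficients at non-source nodes, $H_{ij}$ is the $k_{12-i}\times k_{j-12}$ matrix such that the vector of symbols on the incoming edges of $t_i$ equals $H_{i1}Y_1+H_{i2}Y_2$, where $Y_j$ is the vector of symbols on the outgoing edges of $s_j$; the source encoding is $Y_j=M_jU_j$ with $U_j$ the message vector of $s_j$. $(R_1,R_2)$ is achievable if for some finite field $GF(q)$ there is a linear network code such that, when $s_i$ observes $R_i$ independent symbols of $GF(q)$, $t_1$ uniquely recovers $s_1$'s message and $t_2$ uniquely recovers $s_2$'s message. *)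

theory Defs
  imports Main "Jordan_Normal_Form.DL_Rank"
begin

text \<open>A network is given by a finite set E of edges (parallel edges allowed, each edge
  carries one field symbol per use) together with tail and head maps into the vertex type.\<close>

definition edge_rel :: "'e set \<Rightarrow> ('e \<Rightarrow> 'v) \<Rightarrow> ('e \<Rightarrow> 'v) \<Rightarrow> ('v \<times> 'v) set" where
  "edge_rel E tailv headv = {(tailv e, headv e) | e. e \<in> E}"

definition in_edges :: "'e set \<Rightarrow> ('e \<Rightarrow> 'v) \<Rightarrow> 'v \<Rightarrow> 'e set" where
  "in_edges E headv v = {e \<in> E. headv e = v}"

definition out_edges :: "'e set \<Rightarrow> ('e \<Rightarrow> 'v) \<Rightarrow> 'v \<Rightarrow> 'e set" where
  "out_edges E tailv v = {e \<in> E. tailv e = v}"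

definition is_path :: "'e set \<Rightarrow> ('e \<Rightarrow> 'v) \<Rightarrow> ('e \<Rightarrow> 'v) \<Rightarrow> 'v set \<Rightarrow> 'v set \<Rightarrow> 'e list \<Rightarrow> bool" where
  "is_path E tailv headv S T es \<longleftrightarrow>
     es \<noteq> [] \<and> set es \<subseteq> E \<and> tailv (hd es) \<in> S \<and> headv (last es) \<in> T \<and>
     (\<forall>i. Suc i < length es \<longrightarrow> headv (es ! i) = tailv (es ! Suc i))"

definition is_cut :: "'e set \<Rightarrow> ('e \<Rightarrow> 'v) \<Rightarrow> ('e \<Rightarrow> 'v) \<Rightarrow> 'v set \<Rightarrow> 'v set \<Rightarrow> 'e set \<Rightarrow> bool" where
  "is_cut E tailv headv S T C \<longleftrightarrow>
     C \<subseteq> E \<and> (\<forall>es. is_path E tailv headv S T es \<longrightarrow> set es \<inter> C \<noteq> {})"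

definition mincut :: "'e set \<Rightarrow> ('e \<Rightarrow> 'v) \<Rightarrow> ('e \<Rightarrow> 'v) \<Rightarrow> 'v set \<Rightarrow> 'v set \<Rightarrow> nat" where
  "mincut E tailv headv S T = (LEAST n. \<exists>C. is_cut E tailv headv S T C \<and> card C = n)"

text \<open>The two-unicast setting, including the w.l.o.g. normalisation: s_i has exactly
  k_{i-12} outgoing edges and t_i has exactly k_{12-i} incoming edges.\<close>
definition two_unicast_network ::
  "'e set \<Rightarrow> ('e \<Rightarrow> 'v) \<Rightarrow> ('e \<Rightarrow> 'v) \<Rightarrow> 'v \<Rightarrow> 'v \<Rightarrow> 'v \<Rightarrow> 'v \<Rightarrow> bool" where
  "two_unicast_network E tailv headv s1 s2 t1 t2 \<longleftrightarrow>
     finite E \<and> acyclic (edge_rel E tailv headv) \<and> s1 \<noteq> s2 \<and> t1 \<noteq> t2 \<and>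
     in_edges E headv s1 = {} \<and> in_edges E headv s2 = {} \<and>
     out_edges E tailv t1 = {} \<and> out_edges E tailv t2 = {} \<and>
     card (out_edges E tailv s1) = mincut E tailv headv {s1} {t1, t2} \<and>
     card (out_edges E tailv s2) = mincut E tailv headv {s2} {t1, t2} \<and>
     card (in_edges E headv t1) = mincut E tailv headv {s1, s2} {t1} \<and>
     card (in_edges E headv t2) = mincut E tailv headv {s1, s2} {t2}"

text \<open>Given local coefficients beta (beta e' e is the coefficient of the symbol on e' in the
  symbol sent on e, for e leaving a non-source node), an enumeration out1/out2 of the outgoing
  edges of s1/s2, and source vectors Y1, Y2, an edge-symbol assignment x is consistent if it
  puts Y_j on the outgoing edges of s_j, follows the local linear combinations at every
  non-source node, and is 0 outside E.\<close>
definition consistent_flow ::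
  "'e set \<Rightarrow> ('e \<Rightarrow> 'v) \<Rightarrow> ('e \<Rightarrow> 'v) \<Rightarrow> 'v \<Rightarrow> 'v \<Rightarrow> (nat \<Rightarrow> 'e) \<Rightarrow> (nat \<Rightarrow> 'e) \<Rightarrow>
   ('e \<Rightarrow> 'e \<Rightarrow> 'a::field) \<Rightarrow> 'a vec \<Rightarrow> 'a vec \<Rightarrow> ('e \<Rightarrow> 'a) \<Rightarrow> bool" where
  "consistent_flow E tailv headv s1 s2 out1 out2 beta Y1 Y2 x \<longleftrightarrow>
     (\<forall>b < dim_vec Y1. x (out1 b) = Y1 $ b) \<and>
     (\<forall>b < dim_vec Y2. x (out2 b) = Y2 $ b) \<and>
     (\<forall>e \<in> E. tailv e \<noteq> s1 \<and> tailv e \<noteq> s2 \<longrightarrow>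
         x e = (\<Sum>e' \<in> in_edges E headv (tailv e). beta e' e * x e')) \<and>
     (\<forall>e. e \<notin> E \<longrightarrow> x e = 0)"

text \<open>The (unique, by acyclicity) symbols carried by the edges.\<close>
definition edge_symbols ::
  "'e set \<Rightarrow> ('e \<Rightarrow> 'v) \<Rightarrow> ('e \<Rightarrow> 'v) \<Rightarrow> 'v \<Rightarrow> 'v \<Rightarrow> (nat \<Rightarrow> 'e) \<Rightarrow> (nat \<Rightarrow> 'e) \<Rightarrow>
   ('e \<Rightarrow> 'e \<Rightarrow> 'a::field) \<Rightarrow> 'a vec \<Rightarrow> 'a vec \<Rightarrow> 'e \<Rightarrow> 'a" where
  "edge_symbols E tailv headv s1 s2 out1 out2 beta Y1 Y2 =
     (THE x. consistent_flow E tailv headv s1 s2 out1 out2 beta Y1 Y2 x)"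

definition terminal_obs ::
  "'e set \<Rightarrow> ('e \<Rightarrow> 'v) \<Rightarrow> ('e \<Rightarrow> 'v) \<Rightarrow> 'v \<Rightarrow> 'v \<Rightarrow> (nat \<Rightarrow> 'e) \<Rightarrow> (nat \<Rightarrow> 'e) \<Rightarrow>
   ('e \<Rightarrow> 'e \<Rightarrow> 'a::field) \<Rightarrow> (nat \<Rightarrow> 'e) \<Rightarrow> nat \<Rightarrow> 'a vec \<Rightarrow> 'a vec \<Rightarrow> 'a vec" where
  "terminal_obs E tailv headv s1 s2 out1 out2 beta inn n Y1 Y2 =
     vec n (\<lambda>a. edge_symbols E tailv headv s1 s2 out1 out2 beta Y1 Y2 (inn a))"

text \<open>Transfer matrices: H_{i1} (resp. H_{i2}) is the matrix whose column b is the
  observation at t_i when Y1 is the b-th unit vector and Y2 = 0 (resp. the other way round),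
  so that the observation at t_i equals H_{i1} Y1 + H_{i2} Y2.\<close>
definition transfer1 ::
  "'e set \<Rightarrow> ('e \<Rightarrow> 'v) \<Rightarrow> ('e \<Rightarrow> 'v) \<Rightarrow> 'v \<Rightarrow> 'v \<Rightarrow> (nat \<Rightarrow> 'e) \<Rightarrow> (nat \<Rightarrow> 'e) \<Rightarrow> nat \<Rightarrow> nat \<Rightarrow>
   ('e \<Rightarrow> 'e \<Rightarrow> 'a::field) \<Rightarrow> (nat \<Rightarrow> 'e) \<Rightarrow> nat \<Rightarrow> 'a mat" where
  "transfer1 E tailv headv s1 s2 out1 out2 m1 m2 beta inn n =
     mat n m1 (\<lambda>(a, b). terminal_obs E tailv headv s1 s2 out1 out2 beta inn n
                          (unit_vec m1 b) (0\<^sub>v m2) $ a)"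

definition transfer2 ::
  "'e set \<Rightarrow> ('e \<Rightarrow> 'v) \<Rightarrow> ('e \<Rightarrow> 'v) \<Rightarrow> 'v \<Rightarrow> 'v \<Rightarrow> (nat \<Rightarrow> 'e) \<Rightarrow> (nat \<Rightarrow> 'e) \<Rightarrow> nat \<Rightarrow> nat \<Rightarrow>
   ('e \<Rightarrow> 'e \<Rightarrow> 'a::field) \<Rightarrow> (nat \<Rightarrow> 'e) \<Rightarrow> nat \<Rightarrow> 'a mat" where
  "transfer2 E tailv headv s1 s2 out1 out2 m1 m2 beta inn n =
     mat n m2 (\<lambda>(a, b). terminal_obs E tailv headv s1 s2 out1 out2 beta inn n
                          (0\<^sub>v m1) (unit_vec m2 b) $ a)"

definition mrank :: "'a::field mat \<Rightarrow> nat" where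
  "mrank A = vec_space.rank (dim_row A) A"

definition hcat :: "'a mat \<Rightarrow> 'a mat \<Rightarrow> 'a mat" where
  "hcat A B = mat (dim_row A) (dim_col A + dim_col B)
     (\<lambda>(i, j). if j < dim_col A then A $$ (i, j) else B $$ (i, j - dim_col A))"

text \<open>(R1, R2) is achievable over the field 'a: there are local coefficients at the non-source
  nodes and source encoding matrices M1 (k_{1-12} x R1), M2 (k_{2-12} x R2) such that, with
  Y_j = M_j U_j, the symbols seen by t1 determine U1 uniquely and those seen by t2 determine U2
  uniquely, for all messages U1 in 'a^R1, U2 in 'a^R2.\<close>
definition achievable_over ::
  "'a::field itself \<Rightarrow> 'e set \<Rightarrow> ('e \<Rightarrow> 'v) \<Rightarrow> ('e \<Rightarrow> 'v) \<Rightarrow> 'v \<Rightarrow> 'v \<Rightarrow> 'v \<Rightarrow> 'v \<Rightarrow>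
   (nat \<Rightarrow> 'e) \<Rightarrow> (nat \<Rightarrow> 'e) \<Rightarrow> (nat \<Rightarrow> 'e) \<Rightarrow> (nat \<Rightarrow> 'e) \<Rightarrow> nat \<Rightarrow> nat \<Rightarrow> bool" where
  "achievable_over TYPE('a) E tailv headv s1 s2 t1 t2 out1 out2 in1 in2 R1 R2 \<longleftrightarrow>
     (let m1 = card (out_edges E tailv s1); m2 = card (out_edges E tailv s2);
          n1 = card (in_edges E headv t1); n2 = card (in_edges E headv t2) in
      \<exists>(beta :: 'e \<Rightarrow> 'e \<Rightarrow> 'a) (M1 :: 'a mat) (M2 :: 'a mat).
        M1 \<in> carrier_mat m1 R1 \<and> M2 \<in> carrier_mat m2 R2 \<and>
        (\<forall>U1 U1' U2 U2'. U1 \<in> carrier_vec R1 \<longrightarrow> U1' \<in> carrier_vec R1 \<longrightarrow>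
            U2 \<in> carrier_vec R2 \<longrightarrow> U2' \<in> carrier_vec R2 \<longrightarrow>
           (terminal_obs E tailv headv s1 s2 out1 out2 beta in1 n1 (M1 *\<^sub>v U1) (M2 *\<^sub>v U2) =
            terminal_obs E tailv headv s1 s2 out1 out2 beta in1 n1 (M1 *\<^sub>v U1') (M2 *\<^sub>v U2')
              \<longrightarrow> U1 = U1') \<and>
           (terminal_obs E tailv headv s1 s2 out1 out2 beta in2 n2 (M1 *\<^sub>v U1) (M2 *\<^sub>v U2) =
            terminal_obs E tailv headv s1 s2 out1 out2 beta in2 n2 (M1 *\<^sub>v U1') (M2 *\<^sub>v U2')
              \<longrightarrow> U2 = U2')))"

end

theory Submission
  imports Defs "HOL-Library.Cardinality"
begin

definition lc :: "nat \<Rightarrow> 'a::field vec list \<Rightarrow> 'a vec set" where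
  "lc n ws = (\<lambda>x. mat_of_cols n ws *\<^sub>v x) ` carrier_vec (length ws)"

definition indep :: "nat \<Rightarrow> 'a::field vec list \<Rightarrow> bool" where
  "indep n ws \<longleftrightarrow> (\<forall>x\<in>carrier_vec (length ws). mat_of_cols n ws *\<^sub>v x = 0\<^sub>v n \<longrightarrow> x = 0\<^sub>v (length ws))"

lemma row_mat_of_cols_append:
  assumes "i < n"
  shows "row (mat_of_cols n (xs @ ys)) i = row (mat_of_cols n xs) i @\<^sub>v row (mat_of_cols n ys) i"
  by (rule eq_vecI, auto simp: mat_of_cols_def nth_append assms)

lemma mc_append:
  assumes u: "u \<in> carrier_vec (length xs)" and v: "v \<in> carrier_vec (length ys)"
  shows "mat_of_cols n (xs @ ys) *\<^sub>v (u @\<^sub>v v) = mat_of_cols n xs *\<^sub>v u + mat_of_cols n ys *\<^sub>v v"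
proof (rule eq_vecI)
  fix i assume "i < dim_vec (mat_of_cols n xs *\<^sub>v u + mat_of_cols n ys *\<^sub>v v)"
  hence i: "i < n" by simp
  have r1: "row (mat_of_cols n xs) i \<in> carrier_vec (length xs)"
    and r2: "row (mat_of_cols n ys) i \<in> carrier_vec (length ys)" by (auto intro!: carrier_vecI)
  show "(mat_of_cols n (xs @ ys) *\<^sub>v (u @\<^sub>v v)) $ i = (mat_of_cols n xs *\<^sub>v u + mat_of_cols n ys *\<^sub>v v) $ i"
    using i by (simp add: row_mat_of_cols_append scalar_prod_append[OF r1 r2 u v])
qed auto

lemma mc_carrier[simp]: "mat_of_cols n ws *\<^sub>v x \<in> carrier_vec n"
  by (rule carrier_vecI) simp

lemma lc_carrier: "lc n ws \<subseteq> carrier_vec n"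
  unfolding lc_def by auto

lemma lc_append: "lc n (xs @ ys) = {a + b | a b. a \<in> lc n xs \<and> b \<in> lc n ys}"
proof (intro subset_antisym subsetI)
  fix w assume "w \<in> lc n (xs @ ys)"
  then obtain x where x: "x \<in> carrier_vec (length xs + length ys)" and w: "w = mat_of_cols n (xs@ys) *\<^sub>v x"
    unfolding lc_def by auto
  have xe: "vec_first x (length xs) @\<^sub>v vec_last x (length ys) = x" using x by simp
  have "w = mat_of_cols n (xs@ys) *\<^sub>v (vec_first x (length xs) @\<^sub>v vec_last x (length ys))"
    unfolding xe using w .
  also have "\<dots> = mat_of_cols n xs *\<^sub>v vec_first x (length xs) + mat_of_cols n ys *\<^sub>v vec_last x (length ys)"
    by (rule mc_append) auto
  finally have "w = mat_of_cols n xs *\<^sub>v vec_first x (length xs) + mat_of_cols n ys *\<^sub>v vec_last x (length ys)" .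
  moreover have "mat_of_cols n xs *\<^sub>v vec_first x (length xs) \<in> lc n xs"
    unfolding lc_def by (rule imageI) simp
  moreover have "mat_of_cols n ys *\<^sub>v vec_last x (length ys) \<in> lc n ys"
    unfolding lc_def by (rule imageI) simp
  ultimately show "w \<in> {a + b | a b. a \<in> lc n xs \<and> b \<in> lc n ys}" by blast
next
  fix w assume "w \<in> {a + b | a b. a \<in> lc n xs \<and> b \<in> lc n ys}"
  then obtain a b where ab: "w = a + b" "a \<in> lc n xs" "b \<in> lc n ys" by blast
  from ab(2,3) obtain u v where u: "u \<in> carrier_vec (length xs)" "a = mat_of_cols n xs *\<^sub>v u"
    and v: "v \<in> carrier_vec (length ys)" "b = mat_of_cols n ys *\<^sub>v v" unfolding lc_def by auto
  have "a + b = mat_of_cols n (xs @ ys) *\<^sub>v (u @\<^sub>v v)" using mc_append[OF u(1) v(1)] u v by simp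
  moreover have "u @\<^sub>v v \<in> carrier_vec (length (xs @ ys))" using u v by auto
  ultimately show "w \<in> lc n (xs @ ys)" unfolding lc_def ab(1) by (rule image_eqI)
qed

lemma lc_zero: "0\<^sub>v n \<in> lc n ws"
proof -
  have "mat_of_cols n ws *\<^sub>v 0\<^sub>v (length ws) = 0\<^sub>v n"
    by (rule eq_vecI) (auto simp: scalar_prod_def)
  thus ?thesis unfolding lc_def by (metis image_eqI zero_carrier_vec)
qed

lemma lc_add: "a \<in> lc n ws \<Longrightarrow> b \<in> lc n ws \<Longrightarrow> a + b \<in> lc n ws"
proof -
  assume "a \<in> lc n ws" "b \<in> lc n ws"
  then obtain u v where u: "u \<in> carrier_vec (length ws)" "a = mat_of_cols n ws *\<^sub>v u"
    and v: "v \<in> carrier_vec (length ws)" "b = mat_of_cols n ws *\<^sub>v v" unfolding lc_def by auto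
  have "a + b = mat_of_cols n ws *\<^sub>v (u + v)"
    using mult_add_distrib_mat_vec[OF mat_of_cols_carrier(1) u(1) v(1)] u v by simp
  moreover have "u + v \<in> carrier_vec (length ws)" using u v by simp
  ultimately show ?thesis unfolding lc_def by blast
qed

lemma lc_smult: "a \<in> lc n ws \<Longrightarrow> c \<cdot>\<^sub>v a \<in> lc n ws"
proof -
  assume "a \<in> lc n ws"
  then obtain u where u: "u \<in> carrier_vec (length ws)" "a = mat_of_cols n ws *\<^sub>v u"
    unfolding lc_def by auto
  have "c \<cdot>\<^sub>v a = mat_of_cols n ws *\<^sub>v (c \<cdot>\<^sub>v u)"
    using mult_mat_vec[OF mat_of_cols_carrier(1) u(1)] u by simp
  moreover have "c \<cdot>\<^sub>v u \<in> carrier_vec (length ws)" using u by simp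
  ultimately show ?thesis unfolding lc_def by blast
qed

lemma lc_minus: "a \<in> lc n ws \<Longrightarrow> b \<in> lc n ws \<Longrightarrow> a - b \<in> lc n ws"
proof -
  assume a: "a \<in> lc n ws" and b: "b \<in> lc n ws"
  have ac: "a \<in> carrier_vec n" and bc: "b \<in> carrier_vec n" using lc_carrier a b by auto
  have "a - b = a + (-1) \<cdot>\<^sub>v b" by (rule eq_vecI, insert ac bc, auto)
  thus ?thesis using lc_add[OF a lc_smult[OF b]] by simp
qed

lemma card_carrier_vec': "card (carrier_vec n:: 'b::finite vec set) = CARD('b) ^ n"
proof -
  let ?B = "{xs. set xs \<subseteq> (UNIV::'b set) \<and> length xs = n}"
  have "bij_betw list_of_vec (carrier_vec n) ?B"
  proof (rule bij_betwI[where g = vec_of_list])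
    show "list_of_vec \<in> carrier_vec n \<rightarrow> ?B"
    proof
      fix x :: "'b vec" assume "x \<in> carrier_vec n"
      hence "length (list_of_vec x) = n" by simp
      thus "list_of_vec x \<in> ?B" by simp
    qed
    show "vec_of_list \<in> ?B \<rightarrow> carrier_vec n"
    proof
      fix y :: "'b list" assume "y \<in> ?B"
      hence "length y = n" by simp
      thus "vec_of_list y \<in> carrier_vec n" by (intro carrier_vecI) simp
    qed
    show "\<And>x. x \<in> carrier_vec n \<Longrightarrow> vec_of_list (list_of_vec x) = x" by (rule vec_list)
    show "\<And>y. y \<in> ?B \<Longrightarrow> list_of_vec (vec_of_list y) = y" by (rule list_vec)
  qed
  hence "card (carrier_vec n:: 'b vec set) = card ?B" by (rule bij_betw_same_card)
  also have "\<dots> = card (UNIV::'b set) ^ n" by (rule card_lists_length_eq) simp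
  finally show ?thesis .
qed

lemma finite_carrier_vec'[simp]: "finite (carrier_vec n:: 'b::finite vec set)"
  by (rule card_ge_0_finite, unfold card_carrier_vec', auto)

lemma card_field_gt1: "1 < CARD('a::{field,finite})"
proof -
  have "{0::'a, 1} \<subseteq> UNIV" by simp
  hence "card {0::'a, 1} \<le> CARD('a)" by (intro card_mono) simp_all
  thus ?thesis by simp
qed

lemma finite_lc: "finite (lc n (ws :: 'a::{field,finite} vec list))"
  unfolding lc_def by simp

lemma card_lc_le: "card (lc n (ws :: 'a::{field,finite} vec list)) \<le> CARD('a) ^ length ws"
  unfolding lc_def using card_image_le[OF finite_carrier_vec', of "\<lambda>x. mat_of_cols n ws *\<^sub>v x" "length ws"]
  by (simp only: card_carrier_vec')

lemma indep_inj:
  assumes "indep n ws"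
  shows "inj_on (\<lambda>x. mat_of_cols n ws *\<^sub>v x) (carrier_vec (length ws))"
proof (rule inj_onI)
  fix x y assume x: "x \<in> carrier_vec (length ws)" and y: "y \<in> carrier_vec (length ws)"
    and e: "mat_of_cols n ws *\<^sub>v x = mat_of_cols n ws *\<^sub>v y"
  have "mat_of_cols n ws *\<^sub>v (x - y) = mat_of_cols n ws *\<^sub>v x - mat_of_cols n ws *\<^sub>v y"
    by (rule mult_minus_distrib_mat_vec[OF mat_of_cols_carrier(1) x y])
  also have "\<dots> = 0\<^sub>v n" unfolding e by (rule eq_vecI) auto
  finally have "x - y = 0\<^sub>v (length ws)" using assms x y unfolding indep_def by auto
  show "x = y"
  proof (rule eq_vecI)
    fix i assume i: "i < dim_vec y"
    have "(x - y) $ i = 0" using \<open>x - y = 0\<^sub>v (length ws)\<close> i y by simp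
    thus "x $ i = y $ i" using i x y by simp
  qed (use x y in simp)
qed

lemma card_lc:
  assumes "indep n (ws :: 'a::{field,finite} vec list)"
  shows "card (lc n ws) = CARD('a) ^ length ws"
  unfolding lc_def using card_image[OF indep_inj[OF assms]] by (simp only: card_carrier_vec')

lemma card_lc_indep:
  assumes "card (lc n (ws :: 'a::{field,finite} vec list)) = CARD('a) ^ length ws"
  shows "indep n ws"
  unfolding indep_def
proof (intro ballI impI)
  fix x assume x: "x \<in> carrier_vec (length ws)" and e: "mat_of_cols n ws *\<^sub>v x = 0\<^sub>v n"
  have "inj_on (\<lambda>x. mat_of_cols n ws *\<^sub>v x) (carrier_vec (length ws))"
    by (rule eq_card_imp_inj_on[OF finite_carrier_vec'])
      (use assms in \<open>simp add: lc_def card_carrier_vec'\<close>)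
  moreover have "mat_of_cols n ws *\<^sub>v 0\<^sub>v (length ws) = 0\<^sub>v n"
    by (rule eq_vecI) (auto simp: scalar_prod_def)
  ultimately show "x = 0\<^sub>v (length ws)" using x e inj_onD[of "\<lambda>x. mat_of_cols n ws *\<^sub>v x" _ x "0\<^sub>v (length ws)"] by simp
qed

lemma mc_single:
  assumes w: "(w :: 'a :: field vec) \<in> carrier_vec n" and v: "v \<in> carrier_vec 1"
  shows "mat_of_cols n [w] *\<^sub>v v = (v $ 0) \<cdot>\<^sub>v w"
  by (rule eq_vecI) (use w v in \<open>auto simp: mat_of_cols_def scalar_prod_def row_def intro: mult.commute\<close>)

lemma indep_append_iff:
  "indep n (xs @ ys) \<longleftrightarrow> (\<forall>u \<in> carrier_vec (length xs). \<forall>v \<in> carrier_vec (length ys).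
     mat_of_cols n xs *\<^sub>v u + mat_of_cols n ys *\<^sub>v v = 0\<^sub>v n \<longrightarrow> u = 0\<^sub>v (length xs) \<and> v = 0\<^sub>v (length ys))"
proof
  assume I: "indep n (xs @ ys)"
  show "\<forall>u \<in> carrier_vec (length xs). \<forall>v \<in> carrier_vec (length ys).
     mat_of_cols n xs *\<^sub>v u + mat_of_cols n ys *\<^sub>v v = 0\<^sub>v n \<longrightarrow> u = 0\<^sub>v (length xs) \<and> v = 0\<^sub>v (length ys)"
  proof (intro ballI impI)
    fix u v assume u: "u \<in> carrier_vec (length xs)" and v: "v \<in> carrier_vec (length ys)"
      and e: "mat_of_cols n xs *\<^sub>v u + mat_of_cols n ys *\<^sub>v v = 0\<^sub>v n"
    have "u @\<^sub>v v \<in> carrier_vec (length (xs @ ys))" using u v by auto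
    moreover have "mat_of_cols n (xs @ ys) *\<^sub>v (u @\<^sub>v v) = 0\<^sub>v n" using mc_append[OF u v] e by simp
    ultimately have z: "u @\<^sub>v v = 0\<^sub>v (length (xs @ ys))" using I unfolding indep_def by blast
    have "u = vec_first (u @\<^sub>v v) (length xs)" using u by (auto simp: vec_first_def)
    also have "\<dots> = 0\<^sub>v (length xs)" unfolding z by (auto simp: vec_first_def)
    finally have 1: "u = 0\<^sub>v (length xs)" .
    have "v = vec_last (u @\<^sub>v v) (length ys)" using u v by (auto simp: vec_last_def)
    also have "\<dots> = 0\<^sub>v (length ys)" unfolding z by (auto simp: vec_last_def)
    finally have 2: "v = 0\<^sub>v (length ys)" .
    show "u = 0\<^sub>v (length xs) \<and> v = 0\<^sub>v (length ys)" using 1 2 by simp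
  qed
next
  assume H: "\<forall>u \<in> carrier_vec (length xs). \<forall>v \<in> carrier_vec (length ys).
     mat_of_cols n xs *\<^sub>v u + mat_of_cols n ys *\<^sub>v v = 0\<^sub>v n \<longrightarrow> u = 0\<^sub>v (length xs) \<and> v = 0\<^sub>v (length ys)"
  show "indep n (xs @ ys)" unfolding indep_def
  proof (intro ballI impI)
    fix x assume x: "x \<in> carrier_vec (length (xs @ ys))" and e: "mat_of_cols n (xs @ ys) *\<^sub>v x = 0\<^sub>v n"
    hence x': "x \<in> carrier_vec (length xs + length ys)" by simp
    have xe: "vec_first x (length xs) @\<^sub>v vec_last x (length ys) = x" using x' by simp
    have "mat_of_cols n xs *\<^sub>v vec_first x (length xs) + mat_of_cols n ys *\<^sub>v vec_last x (length ys)
      = mat_of_cols n (xs @ ys) *\<^sub>v x"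
      by (subst xe[symmetric], rule mc_append[symmetric]) auto
    also have "\<dots> = 0\<^sub>v n" by (rule e)
    finally have "vec_first x (length xs) = 0\<^sub>v (length xs) \<and> vec_last x (length ys) = 0\<^sub>v (length ys)"
      using H vec_first_carrier vec_last_carrier by blast
    hence "x = 0\<^sub>v (length xs) @\<^sub>v 0\<^sub>v (length ys)" using xe by simp
    thus "x = 0\<^sub>v (length (xs @ ys))" by (auto intro!: eq_vecI)
  qed
qed

lemma indep_snoc:
  assumes I: "indep n ws" and w: "w \<in> carrier_vec n" and nw: "w \<notin> lc n ws"
  shows "indep n (ws @ [w])"
  unfolding indep_append_iff
proof (intro ballI impI)
  fix u v assume u: "u \<in> carrier_vec (length ws)" and v: "v \<in> carrier_vec (length [w])"
    and e: "mat_of_cols n ws *\<^sub>v u + mat_of_cols n [w] *\<^sub>v v = 0\<^sub>v n"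
  have v1: "v \<in> carrier_vec 1" using v by simp
  have e2: "mat_of_cols n ws *\<^sub>v u + (v $ 0) \<cdot>\<^sub>v w = 0\<^sub>v n" using e mc_single[OF w v1] by simp
  have a: "mat_of_cols n ws *\<^sub>v u \<in> lc n ws" unfolding lc_def using u by (rule imageI)
  have v0: "v $ 0 = 0"
  proof (rule ccontr)
    assume nz: "v $ 0 \<noteq> 0"
    have "w = (- 1 / v $ 0) \<cdot>\<^sub>v (mat_of_cols n ws *\<^sub>v u)"
    proof (rule eq_vecI)
      fix i assume "i < dim_vec ((- 1 / v $ 0) \<cdot>\<^sub>v (mat_of_cols n ws *\<^sub>v u))"
      hence i: "i < n" by simp
      have "(mat_of_cols n ws *\<^sub>v u) $ i + v $ 0 * w $ i = 0"
        using arg_cong[OF e2, of "\<lambda>x. x $ i"] i w by simp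
      hence "v $ 0 * w $ i = - (mat_of_cols n ws *\<^sub>v u) $ i" by (simp add: eq_neg_iff_add_eq_0 add.commute)
      hence "w $ i = - (mat_of_cols n ws *\<^sub>v u) $ i / v $ 0" using nz
        by (simp add: field_simps)
      thus "w $ i = ((- 1 / v $ 0) \<cdot>\<^sub>v (mat_of_cols n ws *\<^sub>v u)) $ i" using i by simp
    qed (use w in simp)
    thus False using nw lc_smult[OF a] by simp
  qed
  have "(v $ 0) \<cdot>\<^sub>v w = 0\<^sub>v n" using v0 w by auto
  hence "mat_of_cols n ws *\<^sub>v u = 0\<^sub>v n" using e2 by simp
  hence "u = 0\<^sub>v (length ws)" using I u unfolding indep_def by blast
  moreover have "v = 0\<^sub>v (length [w])" using v v0 by (auto intro!: eq_vecI)
  ultimately show "u = 0\<^sub>v (length ws) \<and> v = 0\<^sub>v (length [w])" by simp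
qed

lemma lc_nil: "x \<in> lc n [] \<Longrightarrow> x = 0\<^sub>v n"
  unfolding lc_def by (auto intro!: eq_vecI simp: scalar_prod_def)

lemma lc_single_sub:
  assumes "b \<in> lc n [w]" "(w :: 'a::field vec) \<in> carrier_vec n"
  shows "\<exists>c. b = c \<cdot>\<^sub>v w"
proof -
  from assms(1) obtain v where v: "v \<in> carrier_vec 1" "b = mat_of_cols n [w] *\<^sub>v v"
    unfolding lc_def by auto
  thus ?thesis using mc_single[OF assms(2) v(1)] by auto
qed

lemma lc_mono:
  assumes "set ws \<subseteq> lc n us"
  shows "lc n ws \<subseteq> lc n us"
  using assms
proof (induction ws rule: rev_induct)
  case Nil
  show ?case using lc_nil lc_zero by blast
next
  case (snoc w ws)
  have IH: "lc n ws \<subseteq> lc n us" using snoc by simp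
  have w: "w \<in> lc n us" using snoc by simp
  hence wc: "w \<in> carrier_vec n" using lc_carrier by blast
  show ?case
  proof
    fix x assume "x \<in> lc n (ws @ [w])"
    then obtain a b where ab: "x = a + b" "a \<in> lc n ws" "b \<in> lc n [w]"
      unfolding lc_append by blast
    obtain c where "b = c \<cdot>\<^sub>v w" using lc_single_sub[OF ab(3) wc] by blast
    hence bu: "b \<in> lc n us" using lc_smult[OF w] by simp
    have "a \<in> lc n us" using IH ab(2) by blast
    thus "x \<in> lc n us" unfolding ab(1) using lc_add bu by blast
  qed
qed

lemma lc_sub_append1: "lc n xs \<subseteq> lc n (xs @ ys)"
proof
  fix a assume a: "a \<in> lc n xs"
  hence "a \<in> carrier_vec n" using lc_carrier by blast
  hence "a = a + 0\<^sub>v n" by simp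
  thus "a \<in> lc n (xs @ ys)" unfolding lc_append using a lc_zero by blast
qed

lemma lc_sub_append2: "lc n ys \<subseteq> lc n (xs @ ys)"
proof
  fix a assume a: "a \<in> lc n ys"
  hence "a \<in> carrier_vec n" using lc_carrier by blast
  hence "a = 0\<^sub>v n + a" by simp
  thus "a \<in> lc n (xs @ ys)" unfolding lc_append using a lc_zero by blast
qed

lemma lc_comm: "lc n (xs @ ys) = lc n (ys @ xs)"
proof -
  have *: "\<And>a b. a \<in> lc n xs \<Longrightarrow> b \<in> lc n ys \<Longrightarrow> a + b = b + a"
    using lc_carrier by (blast intro: comm_add_vec)
  show ?thesis unfolding lc_append
  proof (intro subset_antisym subsetI)
    fix x assume "x \<in> {a + b |a b. a \<in> lc n xs \<and> b \<in> lc n ys}"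
    then obtain a b where ab: "x = a + b" "a \<in> lc n xs" "b \<in> lc n ys" by blast
    hence "x = b + a" using * by simp
    thus "x \<in> {a + b |a b. a \<in> lc n ys \<and> b \<in> lc n xs}" using ab(2,3) by blast
  next
    fix x assume "x \<in> {a + b |a b. a \<in> lc n ys \<and> b \<in> lc n xs}"
    then obtain a b where ab: "x = a + b" "a \<in> lc n ys" "b \<in> lc n xs" by blast
    hence "x = b + a" using * by simp
    thus "x \<in> {a + b |a b. a \<in> lc n xs \<and> b \<in> lc n ys}" using ab(2,3) by blast
  qed
qed

lemma greedy:
  fixes vs us :: "'a::{field,finite} vec list"
  assumes I: "indep n vs"
    and C: "CARD('a) ^ (length vs + j) \<le> card (lc n (vs @ us))"
  shows "\<exists>ws. length ws = j \<and> set ws \<subseteq> lc n us \<and> indep n (vs @ ws)"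
  using C
proof (induction j)
  case 0
  show ?case using I by (intro exI[of _ "[]"]) simp
next
  case (Suc j)
  have q: "1 < CARD('a)" by (rule card_field_gt1)
  have "CARD('a) ^ (length vs + j) \<le> CARD('a) ^ (length vs + Suc j)"
    using q by (intro power_increasing) auto
  with Suc.prems have "CARD('a) ^ (length vs + j) \<le> card (lc n (vs @ us))" by linarith
  then obtain ws where ws: "length ws = j" "set ws \<subseteq> lc n us" "indep n (vs @ ws)"
    using Suc.IH by blast
  have cw: "card (lc n (vs @ ws)) = CARD('a) ^ (length vs + j)"
    using card_lc[OF ws(3)] ws(1) by simp
  have "CARD('a) ^ (length vs + j) < CARD('a) ^ (length vs + Suc j)"
    using q by (intro power_strict_increasing) auto
  hence lt: "card (lc n (vs @ ws)) < card (lc n (vs @ us))" using cw Suc.prems by linarith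
  have "\<not> lc n (vs @ us) \<subseteq> lc n (vs @ ws)"
  proof
    assume "lc n (vs @ us) \<subseteq> lc n (vs @ ws)"
    hence "card (lc n (vs @ us)) \<le> card (lc n (vs @ ws))" by (intro card_mono finite_lc)
    thus False using lt by simp
  qed
  then obtain t where t: "t \<in> lc n (vs @ us)" "t \<notin> lc n (vs @ ws)" by blast
  then obtain a b where ab: "t = a + b" "a \<in> lc n vs" "b \<in> lc n us"
    unfolding lc_append[of n vs us] by blast
  have a': "a \<in> lc n (vs @ ws)" using ab(2) lc_sub_append1 by blast
  have nb: "b \<notin> lc n (vs @ ws)"
  proof
    assume "b \<in> lc n (vs @ ws)"
    hence "a + b \<in> lc n (vs @ ws)" by (rule lc_add[OF a'])
    thus False using t ab by simp
  qed
  have bc: "b \<in> carrier_vec n" using ab(3) lc_carrier by blast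
  have "indep n ((vs @ ws) @ [b])" by (rule indep_snoc[OF ws(3) bc nb])
  thus ?case using ws ab(3) by (intro exI[of _ "ws @ [b]"]) simp
qed

lemma lc_col_space:
  "lc n ws = vec_space.col_space n (mat_of_cols n (ws :: 'a::field vec list))"
proof -
  interpret V: vec_space "TYPE('a)" n .
  have "V.col_space (mat_of_cols n ws) =
     {y \<in> carrier_vec (dim_row (mat_of_cols n ws)). \<exists>x\<in>carrier_vec (dim_col (mat_of_cols n ws)). mat_of_cols n ws *\<^sub>v x = y}"
    by (rule V.col_space_eq[OF mat_of_cols_carrier(1)])
  also have "\<dots> = lc n ws" unfolding lc_def by auto
  finally show ?thesis by simp
qed

lemma rank_card:
  fixes A :: "'a::{field,finite} mat"
  assumes A: "A \<in> carrier_mat n c"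
  shows "card (lc n (cols A)) = CARD('a) ^ mrank A"
proof -
  interpret V: vec_space "TYPE('a)" n .
  let ?S = "set (cols A)"
  have Sc: "?S \<subseteq> carrier_vec n" using A cols_dim by blast
  have rk: "mrank A = V.rank A" unfolding mrank_def using A by simp
  have vs: "vectorspace class_ring (V.span_vs ?S)"
    using Sc V.span_is_subspace subspace_def V.subspace_is_vs by simp
  have fin: "vectorspace.fin_dim class_ring (V.span_vs ?S)"
    using V.fin_dim_span_cols[OF A] by simp
  obtain \<beta> where fb: "finite \<beta>" "vectorspace.basis class_ring (V.span_vs ?S) \<beta>"
    using vectorspace.finite_basis_exists[OF vs fin] by blast
  have dimb: "vectorspace.dim class_ring (V.span_vs ?S) = card \<beta>"
    by (rule vectorspace.dim_basis[OF vs fb])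
  have b1: "\<beta> \<subseteq> V.span ?S"
    and b2: "\<not> LinearCombinations.module.lin_dep class_ring (V.span_vs ?S) \<beta>"
    and b3: "LinearCombinations.module.span class_ring (V.span_vs ?S) \<beta> = V.span ?S"
    using fb(2) unfolding vectorspace.basis_def[OF vs] by auto
  have sub: "submodule class_ring (V.span ?S) V.V" by (rule V.span_is_submodule[OF Sc])
  have spb: "V.span \<beta> = V.span ?S"
    using V.span_li_not_depend(1)[OF b1 sub] b3 by simp
  have lib: "\<not> V.lin_dep \<beta>"
    using V.span_li_not_depend(2)[OF b1 sub] b2 by simp
  obtain bl where bl: "distinct bl" "set bl = \<beta>" using finite_distinct_list[OF fb(1)] by blast
  have blc: "set bl \<subseteq> carrier_vec n"
    using bl(2) b1 V.span_closed[OF Sc] by blast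
  have "lc n bl = V.span (set bl)"
    unfolding lc_col_space V.col_space_def using blc by simp
  also have "\<dots> = V.span ?S" using bl spb by simp
  also have "\<dots> = lc n (cols A)"
    unfolding lc_col_space V.col_space_def using Sc by simp
  finally have lceq: "lc n bl = lc n (cols A)" .
  have ind: "indep n bl" unfolding indep_def
  proof (intro ballI impI)
    fix x assume x: "x \<in> carrier_vec (length bl)" and e: "mat_of_cols n bl *\<^sub>v x = 0\<^sub>v n"
    show "x = 0\<^sub>v (length bl)"
    proof (rule ccontr)
      assume nz: "x \<noteq> 0\<^sub>v (length bl)"
      have "V.lin_dep (set (cols (mat_of_cols n bl)))"
        by (rule V.lin_depI[OF mat_of_cols_carrier(1) x nz e]) (use blc bl in simp)
      thus False using lib blc bl by simp
    qed
  qed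
  have "card (lc n (cols A)) = CARD('a) ^ length bl" using card_lc[OF ind] lceq by simp
  also have "length bl = card \<beta>" using bl distinct_card by fastforce
  also have "\<dots> = mrank A" using rk dimb unfolding V.rank_def by simp
  finally show ?thesis .
qed

lemma hcat_cols:
  assumes X: "X \<in> carrier_mat n a" and Y: "Y \<in> carrier_mat n b"
  shows "hcat X Y = mat_of_cols n (cols X @ cols Y)"
proof (rule eq_matI)
  fix i j assume i: "i < dim_row (mat_of_cols n (cols X @ cols Y))"
    and j: "j < dim_col (mat_of_cols n (cols X @ cols Y))"
  hence i': "i < n" and j': "j < a + b" using X Y by auto
  show "hcat X Y $$ (i, j) = mat_of_cols n (cols X @ cols Y) $$ (i, j)"
  proof (cases "j < a")
    case True
    thus ?thesis using i' j' X Y by (simp add: hcat_def mat_of_cols_def nth_append)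
  next
    case False
    thus ?thesis using i' j' X Y by (simp add: hcat_def mat_of_cols_def nth_append)
  qed
qed (use X Y in \<open>auto simp: hcat_def\<close>)

lemma hcat_carrier:
  assumes X: "X \<in> carrier_mat n a" and Y: "Y \<in> carrier_mat n b"
  shows "hcat X Y \<in> carrier_mat n (a + b)"
  using X Y by (simp add: hcat_def)

lemma cols_hcat:
  assumes X: "X \<in> carrier_mat n a" and Y: "Y \<in> carrier_mat n b"
  shows "cols (hcat X Y) = cols X @ cols Y"
proof -
  have "set (cols X) \<subseteq> carrier_vec n" "set (cols Y) \<subseteq> carrier_vec n"
    using X Y cols_dim[of X] cols_dim[of Y] by auto
  hence "set (cols X @ cols Y) \<subseteq> carrier_vec n" by simp
  thus ?thesis unfolding hcat_cols[OF X Y] by simp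
qed

lemma lc_cols:
  assumes X: "X \<in> carrier_mat n c"
  shows "lc n (cols X) = (\<lambda>x. X *\<^sub>v x) ` carrier_vec c"
proof -
  have "mat_of_cols n (cols X) = X" using X mat_of_cols_cols[of X] by simp
  thus ?thesis unfolding lc_def using X by simp
qed

lemma indep_cols_iff:
  assumes X: "X \<in> carrier_mat n c"
  shows "indep n (cols X) \<longleftrightarrow> (\<forall>x\<in>carrier_vec c. X *\<^sub>v x = 0\<^sub>v n \<longrightarrow> x = 0\<^sub>v c)"
proof -
  have "mat_of_cols n (cols X) = X" using X mat_of_cols_cols[of X] by simp
  thus ?thesis unfolding indep_def using X by simp
qed

lemma full_rank_indep:
  fixes X :: "'a::{field,finite} mat"
  assumes X: "X \<in> carrier_mat n c" and r: "mrank X = c"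
  shows "indep n (cols X)"
  by (rule card_lc_indep) (use rank_card[OF X] r X in simp)

lemma indep_prefix:
  assumes I: "indep n (xs @ ys)"
  shows "indep n xs"
  unfolding indep_def
proof (intro ballI impI)
  fix u assume u: "u \<in> carrier_vec (length xs)" and e: "mat_of_cols n xs *\<^sub>v u = 0\<^sub>v n"
  have z: "mat_of_cols n ys *\<^sub>v 0\<^sub>v (length ys) = 0\<^sub>v n" by (rule eq_vecI) (auto simp: scalar_prod_def)
  have zc: "0\<^sub>v (length ys) \<in> carrier_vec (length ys)" by simp
  have eq: "mat_of_cols n xs *\<^sub>v u + mat_of_cols n ys *\<^sub>v 0\<^sub>v (length ys) = 0\<^sub>v n" unfolding z e by simp
  have "u = 0\<^sub>v (length xs) \<and> 0\<^sub>v (length ys) = 0\<^sub>v (length ys)"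
    using I[unfolded indep_append_iff] u zc eq by blast
  thus "u = 0\<^sub>v (length xs)" by simp
qed

lemma indep_suffix:
  assumes I: "indep n (xs @ ys)"
  shows "indep n ys"
  unfolding indep_def
proof (intro ballI impI)
  fix v assume v: "v \<in> carrier_vec (length ys)" and e: "mat_of_cols n ys *\<^sub>v v = 0\<^sub>v n"
  have z: "mat_of_cols n xs *\<^sub>v 0\<^sub>v (length xs) = 0\<^sub>v n" by (rule eq_vecI) (auto simp: scalar_prod_def)
  have zc: "0\<^sub>v (length xs) \<in> carrier_vec (length xs)" by simp
  have eq: "mat_of_cols n xs *\<^sub>v 0\<^sub>v (length xs) + mat_of_cols n ys *\<^sub>v v = 0\<^sub>v n" unfolding z e by simp
  have "0\<^sub>v (length xs) = 0\<^sub>v (length xs) \<and> v = 0\<^sub>v (length ys)"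
    using I[unfolded indep_append_iff] v zc eq by blast
  thus "v = 0\<^sub>v (length ys)" by simp
qed

lemma mult_mat_of_cols:
  assumes X: "X \<in> carrier_mat n c" and zs: "set zs \<subseteq> carrier_vec c"
  shows "X * mat_of_cols c zs = mat_of_cols n (map (\<lambda>z. X *\<^sub>v z) zs)"
proof (rule eq_matI)
  fix i j assume i: "i < dim_row (mat_of_cols n (map (\<lambda>z. X *\<^sub>v z) zs))"
    and j: "j < dim_col (mat_of_cols n (map (\<lambda>z. X *\<^sub>v z) zs))"
  hence i': "i < n" and j': "j < length zs" by auto
  have zj: "zs ! j \<in> carrier_vec c" using zs j' by auto
  have "col (mat_of_cols c zs) j = zs ! j" using col_mat_of_cols[OF j' zj] .
  thus "(X * mat_of_cols c zs) $$ (i, j) = mat_of_cols n (map (\<lambda>z. X *\<^sub>v z) zs) $$ (i, j)"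
    using i' j' X by (simp add: mat_of_cols_def)
qed (use X in auto)

lemma choose_pre:
  assumes X: "X \<in> carrier_mat n c" and ps: "set ps \<subseteq> lc n (cols X)"
  shows "\<exists>zs. set zs \<subseteq> carrier_vec c \<and> map (\<lambda>z. X *\<^sub>v z) zs = ps"
  using ps
proof (induction ps)
  case Nil
  show ?case by simp
next
  case (Cons p ps)
  then obtain zs where zs: "set zs \<subseteq> carrier_vec c" "map (\<lambda>z. X *\<^sub>v z) zs = ps" by auto
  have "p \<in> (\<lambda>x. X *\<^sub>v x) ` carrier_vec c" using Cons.prems lc_cols[OF X] by auto
  then obtain z where z: "z \<in> carrier_vec c" "p = X *\<^sub>v z" by blast
  show ?case using zs z by (intro exI[of _ "z # zs"]) simp
qed

lemma pow_le_exp: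
  assumes "CARD('a::{field,finite}) ^ a \<le> CARD('a) ^ b"
  shows "a \<le> b"
  using power_le_imp_le_exp[OF card_field_gt1 assms] .

lemma vec_eq_diff:
  assumes "a \<in> carrier_vec n" "b \<in> carrier_vec n" "c \<in> carrier_vec n" "d \<in> carrier_vec n"
    and "a + b = c + (d :: 'a::ab_group_add vec)"
  shows "(b - d) + (a - c) = 0\<^sub>v n"
proof (rule eq_vecI)
  fix i assume "i < dim_vec (0\<^sub>v n :: 'a vec)"
  hence i: "i < n" by simp
  have dm: "dim_vec a = n" "dim_vec b = n" "dim_vec c = n" "dim_vec d = n" using assms(1-4) by auto
  have "(a + b) $ i = (c + d) $ i" using assms(5) by simp
  hence "a $ i + b $ i = c $ i + d $ i" using dm i by simp
  thus "(b - d + (a - c)) $ i = 0\<^sub>v n $ i" using dm i by (simp add: algebra_simps)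
qed (use assms in simp)

lemma diff_eq0:
  assumes "x \<in> carrier_vec n" "y \<in> carrier_vec n" "x - y = (0\<^sub>v n :: 'a::ab_group_add vec)"
  shows "x = y"
proof (rule eq_vecI)
  fix i assume i: "i < dim_vec y"
  have dm: "dim_vec x = n" "dim_vec y = n" using assms(1,2) by auto
  have "(x - y) $ i = 0" using assms(3) dm i by simp
  thus "x $ i = y $ i" using i dm by simp
qed (use assms in simp)

lemma la_main:
  fixes H11 H12 H21 H22 M1 M2 :: "'a::{field,finite} mat"
  assumes H11: "H11 \<in> carrier_mat n1 m1" and H12: "H12 \<in> carrier_mat n1 m2"
    and H21: "H21 \<in> carrier_mat n2 m1" and H22: "H22 \<in> carrier_mat n2 m2"
    and M1: "M1 \<in> carrier_mat m1 a1" and M2: "M2 \<in> carrier_mat m2 a2"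
    and rH12: "mrank H12 = a2" and rH22: "mrank H22 = k22"
    and rHM1: "mrank (hcat (H11 * M1) (H12 * M2)) = a1 + a2"
    and rHM2: "mrank (hcat (H21 * M1) (H22 * M2)) = a1 + a2"
    and R1: "R1 \<le> a1" and R2: "R2 \<le> k22" and R12: "R1 + R2 \<le> mrank (hcat (H21 * M1) H22)"
  shows "\<exists>M1' M2'. M1' \<in> carrier_mat m1 R1 \<and> M2' \<in> carrier_mat m2 R2 \<and>
    (\<forall>U1 U1' U2 U2'. U1 \<in> carrier_vec R1 \<longrightarrow> U1' \<in> carrier_vec R1 \<longrightarrow>
        U2 \<in> carrier_vec R2 \<longrightarrow> U2' \<in> carrier_vec R2 \<longrightarrow>
      (H11 *\<^sub>v (M1' *\<^sub>v U1) + H12 *\<^sub>v (M2' *\<^sub>v U2) = H11 *\<^sub>v (M1' *\<^sub>v U1') + H12 *\<^sub>v (M2' *\<^sub>v U2')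
         \<longrightarrow> U1 = U1') \<and>
      (H21 *\<^sub>v (M1' *\<^sub>v U1) + H22 *\<^sub>v (M2' *\<^sub>v U2) = H21 *\<^sub>v (M1' *\<^sub>v U1') + H22 *\<^sub>v (M2' *\<^sub>v U2')
         \<longrightarrow> U2 = U2'))"
proof -
  let ?q = "CARD('a)"
  define A where "A = H21 * M1"
  define B where "B = H22"
  define C where "C = H11 * M1"
  define D where "D = H12 * M2"
  have A: "A \<in> carrier_mat n2 a1" unfolding A_def using H21 M1 by simp
  have B: "B \<in> carrier_mat n2 m2" unfolding B_def using H22 by simp
  have C: "C \<in> carrier_mat n1 a1" unfolding C_def using H11 M1 by simp
  have D: "D \<in> carrier_mat n1 a2" unfolding D_def using H12 M2 by simp
  have HM2: "H22 * M2 \<in> carrier_mat n2 a2" using H22 M2 by simp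
  have indCD: "indep n1 (cols C @ cols D)"
    using full_rank_indep[OF hcat_carrier[OF C D]] rHM1 cols_hcat[OF C D]
    unfolding C_def D_def by simp
  have indAB2: "indep n2 (cols A @ cols (H22 * M2))"
    using full_rank_indep[OF hcat_carrier[OF A HM2]] rHM2 cols_hcat[OF A HM2]
    unfolding A_def by simp
  have indA: "indep n2 (cols A)" by (rule indep_prefix[OF indAB2])
  define r where "r = mrank (hcat A B)"
  have cardAB: "card (lc n2 (cols A @ cols B)) = ?q ^ r"
    using rank_card[OF hcat_carrier[OF A B]] cols_hcat[OF A B] unfolding r_def by simp
  have cardB: "card (lc n2 (cols B)) = ?q ^ k22"
    using rank_card[OF B] rH22 unfolding B_def by simp
  have cardA: "card (lc n2 (cols A)) = ?q ^ a1"
    using card_lc[OF indA] A by simp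
  have "card (lc n2 (cols A)) \<le> card (lc n2 (cols A @ cols B))"
    by (intro card_mono finite_lc lc_sub_append1)
  hence a1r: "a1 \<le> r" using cardA cardAB pow_le_exp by simp
  have R12r: "R1 + R2 \<le> r" using R12 unfolding r_def A_def B_def .
  define j1 where "j1 = min R2 (r - a1)"
  have "?q ^ (length (cols A) + j1) \<le> card (lc n2 (cols A @ cols B))"
    unfolding cardAB using A a1r card_field_gt1 by (intro power_increasing) (auto simp: j1_def)
  from greedy[OF indA this] obtain ws1 where ws1: "length ws1 = j1" "set ws1 \<subseteq> lc n2 (cols B)"
    "indep n2 (cols A @ ws1)" by blast
  have ind1: "indep n2 ws1" by (rule indep_suffix[OF ws1(3)])
  have "?q ^ (length ws1 + (R2 - j1)) \<le> card (lc n2 (ws1 @ cols B))"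
  proof -
    have "?q ^ (length ws1 + (R2 - j1)) = ?q ^ R2" using ws1(1) by (simp add: j1_def)
    also have "\<dots> \<le> ?q ^ k22" using R2 card_field_gt1 by (intro power_increasing) auto
    also have "\<dots> = card (lc n2 (cols B))" using cardB by simp
    also have "\<dots> \<le> card (lc n2 (ws1 @ cols B))" by (intro card_mono finite_lc lc_sub_append2)
    finally show ?thesis .
  qed
  from greedy[OF ind1 this] obtain ws2 where ws2: "length ws2 = R2 - j1" "set ws2 \<subseteq> lc n2 (cols B)"
    "indep n2 (ws1 @ ws2)" by blast
  define W where "W = ws1 @ ws2"
  have W: "length W = R2" "set W \<subseteq> lc n2 (cols B)" "indep n2 W"
    using ws1 ws2 unfolding W_def by (auto simp: j1_def)
  have "?q ^ (length W + R1) \<le> card (lc n2 (W @ cols A))"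
  proof -
    have "?q ^ (length W + R1) \<le> ?q ^ (a1 + j1)"
      using W(1) R1 R12r card_field_gt1 by (intro power_increasing) (auto simp: j1_def)
    also have "\<dots> = card (lc n2 (cols A @ ws1))" using card_lc[OF ws1(3)] A ws1(1) by simp
    also have "\<dots> \<le> card (lc n2 ((cols A @ ws1) @ ws2))" by (intro card_mono finite_lc lc_sub_append1)
    also have "lc n2 ((cols A @ ws1) @ ws2) = lc n2 (W @ cols A)"
      unfolding W_def using lc_comm[of n2 "cols A" "ws1 @ ws2"] by simp
    finally show ?thesis .
  qed
  from greedy[OF W(3) this] obtain ps where ps: "length ps = R1" "set ps \<subseteq> lc n2 (cols A)"
    "indep n2 (W @ ps)" by blast
  obtain zs where zs: "set zs \<subseteq> carrier_vec a1" "map (\<lambda>z. A *\<^sub>v z) zs = ps"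
    using choose_pre[OF A ps(2)] by blast
  obtain ys where ys: "set ys \<subseteq> carrier_vec m2" "map (\<lambda>z. B *\<^sub>v z) ys = W"
    using choose_pre[OF B W(2)] by blast
  define P where "P = mat_of_cols a1 zs"
  have P: "P \<in> carrier_mat a1 R1" unfolding P_def using zs ps(1) by auto
  define M1' where "M1' = M1 * P"
  define M2' where "M2' = mat_of_cols m2 ys"
  have M1': "M1' \<in> carrier_mat m1 R1" unfolding M1'_def using M1 P by simp
  have M2': "M2' \<in> carrier_mat m2 R2" unfolding M2'_def using ys W(1) by auto
  have AP: "A * P = mat_of_cols n2 ps" unfolding P_def using mult_mat_of_cols[OF A zs(1)] zs(2) by simp
  have BM: "B * M2' = mat_of_cols n2 W" unfolding M2'_def using mult_mat_of_cols[OF B ys(1)] ys(2) by simp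
  have mcC: "mat_of_cols n1 (cols C) = C" using mat_of_cols_cols[of C] C by simp
  have mcD: "mat_of_cols n1 (cols D) = D" using mat_of_cols_cols[of D] D by simp
  have indD: "indep n1 (cols D)" by (rule indep_suffix[OF indCD])
  have lcD: "lc n1 (cols D) = lc n1 (cols H12)"
  proof (rule card_subset_eq)
    show "finite (lc n1 (cols H12))" by (rule finite_lc)
    show "lc n1 (cols D) \<subseteq> lc n1 (cols H12)"
    proof
      fix x assume "x \<in> lc n1 (cols D)"
      then obtain z where z: "z \<in> carrier_vec a2" "x = D *\<^sub>v z" using lc_cols[OF D] by auto
      have "x = H12 *\<^sub>v (M2 *\<^sub>v z)" unfolding z(2) D_def using H12 M2 z(1) by simp
      moreover have "M2 *\<^sub>v z \<in> carrier_vec m2" using M2 z(1) by simp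
      ultimately show "x \<in> lc n1 (cols H12)" unfolding lc_cols[OF H12] by simp
    qed
    show "card (lc n1 (cols D)) = card (lc n1 (cols H12))"
      using card_lc[OF indD] D rank_card[OF H12] rH12 by simp
  qed
  have lin1: "H11 *\<^sub>v (M1' *\<^sub>v U) = C *\<^sub>v (P *\<^sub>v U)" if "U \<in> carrier_vec R1" for U
    unfolding M1'_def C_def using H11 M1 P that by simp
  have lin2: "H21 *\<^sub>v (M1' *\<^sub>v U) = mat_of_cols n2 ps *\<^sub>v U" if U: "U \<in> carrier_vec R1" for U
  proof -
    have "H21 *\<^sub>v (M1' *\<^sub>v U) = A *\<^sub>v (P *\<^sub>v U)" unfolding M1'_def A_def using H21 M1 P U by simp
    also have "\<dots> = (A * P) *\<^sub>v U" using A P U by simp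
    finally show ?thesis unfolding AP .
  qed
  have lin3: "H22 *\<^sub>v (M2' *\<^sub>v U) = mat_of_cols n2 W *\<^sub>v U" if U: "U \<in> carrier_vec R2" for U
  proof -
    have "H22 *\<^sub>v (M2' *\<^sub>v U) = (B * M2') *\<^sub>v U" unfolding B_def using H22 M2' U by simp
    thus ?thesis unfolding BM .
  qed
  have lin4: "H12 *\<^sub>v (M2' *\<^sub>v U) \<in> lc n1 (cols D)" if U: "U \<in> carrier_vec R2" for U
    unfolding lcD lc_cols[OF H12] using M2' U by simp
  show ?thesis
  proof (intro exI conjI allI impI)
    show "M1' \<in> carrier_mat m1 R1" by (rule M1')
    show "M2' \<in> carrier_mat m2 R2" by (rule M2')
  next
    fix U1 U1' U2 U2' :: "'a vec" assume U1: "U1 \<in> carrier_vec R1" and U1': "U1' \<in> carrier_vec R1"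
      and U2: "U2 \<in> carrier_vec R2" and U2': "U2' \<in> carrier_vec R2"
    {
      assume eq: "H21 *\<^sub>v (M1' *\<^sub>v U1) + H22 *\<^sub>v (M2' *\<^sub>v U2) = H21 *\<^sub>v (M1' *\<^sub>v U1') + H22 *\<^sub>v (M2' *\<^sub>v U2')"
      hence eq': "mat_of_cols n2 ps *\<^sub>v U1 + mat_of_cols n2 W *\<^sub>v U2 = mat_of_cols n2 ps *\<^sub>v U1' + mat_of_cols n2 W *\<^sub>v U2'"
        using lin2[OF U1] lin2[OF U1'] lin3[OF U2] lin3[OF U2'] by simp
      have "(mat_of_cols n2 W *\<^sub>v U2 - mat_of_cols n2 W *\<^sub>v U2') + (mat_of_cols n2 ps *\<^sub>v U1 - mat_of_cols n2 ps *\<^sub>v U1') = 0\<^sub>v n2"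
        by (rule vec_eq_diff[OF _ _ _ _ eq']) auto
      hence "mat_of_cols n2 W *\<^sub>v (U2 - U2') + mat_of_cols n2 ps *\<^sub>v (U1 - U1') = 0\<^sub>v n2"
        using mult_minus_distrib_mat_vec[OF mat_of_cols_carrier(1), of U2 W U2' n2]
          mult_minus_distrib_mat_vec[OF mat_of_cols_carrier(1), of U1 ps U1' n2] U1 U1' U2 U2' W(1) ps(1)
        by simp
      moreover have "U2 - U2' \<in> carrier_vec (length W)" "U1 - U1' \<in> carrier_vec (length ps)"
        using U1 U1' U2 U2' W(1) ps(1) by auto
      ultimately have "U2 - U2' = 0\<^sub>v (length W)"
        using ps(3)[unfolded indep_append_iff] by blast
      thus "U2 = U2'" using diff_eq0[OF U2 U2'] W(1) by simp
    }
    {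
      assume eq: "H11 *\<^sub>v (M1' *\<^sub>v U1) + H12 *\<^sub>v (M2' *\<^sub>v U2) = H11 *\<^sub>v (M1' *\<^sub>v U1') + H12 *\<^sub>v (M2' *\<^sub>v U2')"
      define h where "h = H12 *\<^sub>v (M2' *\<^sub>v U2)"
      define h' where "h' = H12 *\<^sub>v (M2' *\<^sub>v U2')"
      have h: "h \<in> lc n1 (cols D)" unfolding h_def by (rule lin4[OF U2])
      have h': "h' \<in> lc n1 (cols D)" unfolding h'_def by (rule lin4[OF U2'])
      have PU1: "P *\<^sub>v U1 \<in> carrier_vec a1" and PU1': "P *\<^sub>v U1' \<in> carrier_vec a1" using P U1 U1' by auto
      have eq': "C *\<^sub>v (P *\<^sub>v U1) + h = C *\<^sub>v (P *\<^sub>v U1') + h'"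
        using eq lin1[OF U1] lin1[OF U1'] unfolding h_def h'_def by simp
      have hc: "h \<in> carrier_vec n1" "h' \<in> carrier_vec n1" using h h' lc_carrier by blast+
      have "(h - h') + (C *\<^sub>v (P *\<^sub>v U1) - C *\<^sub>v (P *\<^sub>v U1')) = 0\<^sub>v n1"
        by (rule vec_eq_diff[OF _ _ _ _ eq']) (use C PU1 PU1' hc in auto)
      moreover obtain z where z: "z \<in> carrier_vec a2" "h - h' = D *\<^sub>v z"
        using lc_minus[OF h h'] lc_cols[OF D] by auto
      moreover have "C *\<^sub>v (P *\<^sub>v U1) - C *\<^sub>v (P *\<^sub>v U1') = C *\<^sub>v (P *\<^sub>v U1 - P *\<^sub>v U1')"
        using mult_minus_distrib_mat_vec[OF C PU1 PU1'] by simp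
      ultimately have e0: "C *\<^sub>v (P *\<^sub>v U1 - P *\<^sub>v U1') + D *\<^sub>v z = 0\<^sub>v n1"
        using C D PU1 PU1' by (simp add: comm_add_vec[of "D *\<^sub>v z" n1])
      have "P *\<^sub>v U1 - P *\<^sub>v U1' \<in> carrier_vec (length (cols C))" using C PU1 PU1' by simp
      moreover have "z \<in> carrier_vec (length (cols D))" using D z(1) by simp
      ultimately have "P *\<^sub>v U1 - P *\<^sub>v U1' = 0\<^sub>v (length (cols C))"
        using indCD[unfolded indep_append_iff mcC mcD] e0 by blast
      hence P0: "P *\<^sub>v (U1 - U1') = 0\<^sub>v a1"
        using mult_minus_distrib_mat_vec[OF P U1 U1'] C by simp
      have "mat_of_cols n2 ps *\<^sub>v (U1 - U1') = (A * P) *\<^sub>v (U1 - U1')" unfolding AP ..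
      also have "\<dots> = A *\<^sub>v (P *\<^sub>v (U1 - U1'))" using A P U1 U1' by simp
      also have "\<dots> = 0\<^sub>v n2" unfolding P0 using A by (intro eq_vecI) (auto simp: scalar_prod_def)
      finally have "mat_of_cols n2 ps *\<^sub>v (U1 - U1') = 0\<^sub>v n2" .
      moreover have "U1 - U1' \<in> carrier_vec (length ps)" using U1 U1' ps(1) by simp
      ultimately have "U1 - U1' = 0\<^sub>v (length ps)"
        using indep_suffix[OF ps(3)] unfolding indep_def by blast
      thus "U1 = U1'" using diff_eq0[OF U1 U1'] ps(1) by simp
    }
  qed
qed

locale netw =
  fixes E :: "'e set" and tailv headv :: "'e \<Rightarrow> 'v" and s1 s2 :: 'v
    and out1 out2 :: "nat \<Rightarrow> 'e" and k1 k2 :: nat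
    and beta :: "'e \<Rightarrow> 'e \<Rightarrow> 'a::field"
  assumes finE: "finite E"
    and acyc: "acyclic (edge_rel E tailv headv)"
    and s12: "s1 \<noteq> s2"
    and bij1: "bij_betw out1 {..<k1} (out_edges E tailv s1)"
    and bij2: "bij_betw out2 {..<k2} (out_edges E tailv s2)"
begin

definition cf :: "(nat \<Rightarrow> 'a) \<Rightarrow> (nat \<Rightarrow> 'a) \<Rightarrow> ('e \<Rightarrow> 'a) \<Rightarrow> bool" where
  "cf y1 y2 x \<longleftrightarrow>
     (\<forall>b < k1. x (out1 b) = y1 b) \<and>
     (\<forall>b < k2. x (out2 b) = y2 b) \<and>
     (\<forall>e \<in> E. tailv e \<noteq> s1 \<and> tailv e \<noteq> s2 \<longrightarrow>
         x e = (\<Sum>e' \<in> in_edges E headv (tailv e). beta e' e * x e')) \<and>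
     (\<forall>e. e \<notin> E \<longrightarrow> x e = 0)"

lemma consistent_cf:
  assumes "dim_vec Y1 = k1" "dim_vec Y2 = k2"
  shows "consistent_flow E tailv headv s1 s2 out1 out2 beta Y1 Y2 x = cf (\<lambda>b. Y1 $ b) (\<lambda>b. Y2 $ b) x"
  unfolding consistent_flow_def cf_def using assms by simp

definition R :: "('e \<times> 'e) set" where
  "R = {(e', e). e' \<in> E \<and> e \<in> E \<and> headv e' = tailv e}"

lemma wfR: "wf R"
proof -
  have fin: "finite (edge_rel E tailv headv)"
  proof -
    have "edge_rel E tailv headv = (\<lambda>e. (tailv e, headv e)) ` E" unfolding edge_rel_def by auto
    thus ?thesis using finE by simp
  qed
  have "wf (edge_rel E tailv headv)" by (rule finite_acyclic_wf[OF fin acyc])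
  hence "wf (inv_image (edge_rel E tailv headv) tailv)" by simp
  moreover have "R \<subseteq> inv_image (edge_rel E tailv headv) tailv"
    unfolding R_def inv_image_def edge_rel_def by auto
  ultimately show ?thesis by (rule wf_subset)
qed

lemma in_R: "e \<in> E \<Longrightarrow> e' \<in> in_edges E headv (tailv e) \<Longrightarrow> (e', e) \<in> R"
  unfolding R_def in_edges_def by auto

lemma out1_E: "b < k1 \<Longrightarrow> out1 b \<in> E \<and> tailv (out1 b) = s1"
  using bij_betwE[OF bij1] unfolding out_edges_def by auto

lemma out2_E: "b < k2 \<Longrightarrow> out2 b \<in> E \<and> tailv (out2 b) = s2"
  using bij_betwE[OF bij2] unfolding out_edges_def by auto

lemma src1: "e \<in> E \<Longrightarrow> tailv e = s1 \<Longrightarrow> \<exists>b<k1. e = out1 b"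
proof -
  assume "e \<in> E" "tailv e = s1"
  hence "e \<in> out_edges E tailv s1" unfolding out_edges_def by simp
  hence "e \<in> out1 ` {..<k1}" using bij_betw_imp_surj_on[OF bij1] by simp
  thus ?thesis by auto
qed

lemma src2: "e \<in> E \<Longrightarrow> tailv e = s2 \<Longrightarrow> \<exists>b<k2. e = out2 b"
proof -
  assume "e \<in> E" "tailv e = s2"
  hence "e \<in> out_edges E tailv s2" unfolding out_edges_def by simp
  hence "e \<in> out2 ` {..<k2}" using bij_betw_imp_surj_on[OF bij2] by simp
  thus ?thesis by auto
qed

lemma cf_unique:
  assumes x: "cf y1 y2 x" and x': "cf y1 y2 x'"
  shows "x = x'"
proof
  fix e
  show "x e = x' e"
  proof (induction e rule: wf_induct[OF wfR])
    case (1 e)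
    show ?case
    proof (cases "e \<in> E")
      case False
      thus ?thesis using x x' unfolding cf_def by simp
    next
      case eE: True
      show ?thesis
      proof (cases "tailv e = s1")
        case True
        then obtain b where "b < k1" "e = out1 b" using src1[OF eE] by blast
        thus ?thesis using x x' unfolding cf_def by simp
      next
        case n1: False
        show ?thesis
        proof (cases "tailv e = s2")
          case True
          then obtain b where "b < k2" "e = out2 b" using src2[OF eE] by blast
          thus ?thesis using x x' unfolding cf_def by simp
        next
          case n2: False
          have "x e = (\<Sum>e' \<in> in_edges E headv (tailv e). beta e' e * x e')"
            using x eE n1 n2 unfolding cf_def by blast
          also have "\<dots> = (\<Sum>e' \<in> in_edges E headv (tailv e). beta e' e * x' e')"
            by (rule sum.cong[OF refl]) (use 1 in_R[OF eE] in simp)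
          also have "\<dots> = x' e"
            using x' eE n1 n2 unfolding cf_def by simp
          finally show ?thesis .
        qed
      qed
    qed
  qed
qed

definition Fstep :: "(nat \<Rightarrow> 'a) \<Rightarrow> (nat \<Rightarrow> 'a) \<Rightarrow> ('e \<Rightarrow> 'a) \<Rightarrow> 'e \<Rightarrow> 'a" where
  "Fstep y1 y2 g e = (if e \<notin> E then 0 else if tailv e = s1 then y1 (inv_into {..<k1} out1 e)
     else if tailv e = s2 then y2 (inv_into {..<k2} out2 e)
     else (\<Sum>e' \<in> in_edges E headv (tailv e). beta e' e * g e'))"

lemma cf_exists: "cf y1 y2 (wfrec R (Fstep y1 y2))"
proof -
  define x where "x = wfrec R (Fstep y1 y2)"
  have xe: "x e = Fstep y1 y2 (cut x R e) e" for e
    unfolding x_def by (rule wfrec[OF wfR])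
  have i1: "inj_on out1 {..<k1}" using bij1 bij_betw_def by blast
  have i2: "inj_on out2 {..<k2}" using bij2 bij_betw_def by blast
  have "cf y1 y2 x" unfolding cf_def
  proof (intro conjI allI impI ballI)
    fix b assume b: "b < k1"
    have "inv_into {..<k1} out1 (out1 b) = b" using inv_into_f_f[OF i1] b by simp
    thus "x (out1 b) = y1 b" using xe[of "out1 b"] out1_E[OF b] unfolding Fstep_def by simp
  next
    fix b assume b: "b < k2"
    have "inv_into {..<k2} out2 (out2 b) = b" using inv_into_f_f[OF i2] b by simp
    thus "x (out2 b) = y2 b" using xe[of "out2 b"] out2_E[OF b] s12 unfolding Fstep_def by simp
  next
    fix e assume eE: "e \<in> E" and n: "tailv e \<noteq> s1 \<and> tailv e \<noteq> s2"
    have "x e = (\<Sum>e' \<in> in_edges E headv (tailv e). beta e' e * cut x R e e')"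
      using xe[of e] eE n unfolding Fstep_def by simp
    also have "\<dots> = (\<Sum>e' \<in> in_edges E headv (tailv e). beta e' e * x e')"
      by (rule sum.cong[OF refl]) (simp add: cut_apply in_R[OF eE])
    finally show "x e = (\<Sum>e' \<in> in_edges E headv (tailv e). beta e' e * x e')" .
  next
    fix e assume "e \<notin> E"
    thus "x e = 0" using xe[of e] unfolding Fstep_def by simp
  qed
  thus ?thesis unfolding x_def .
qed

lemma cf_cong:
  assumes "\<And>b. b < k1 \<Longrightarrow> y1 b = z1 b" "\<And>b. b < k2 \<Longrightarrow> y2 b = z2 b"
  shows "cf y1 y2 x = cf z1 z2 x"
  unfolding cf_def using assms by simp

lemma cf_add:
  assumes "cf a1 a2 x" "cf b1 b2 x'"
  shows "cf (\<lambda>b. a1 b + b1 b) (\<lambda>b. a2 b + b2 b) (\<lambda>e. x e + x' e)"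
  using assms unfolding cf_def by (simp add: sum.distrib distrib_left)

lemma cf_sum:
  assumes fin: "finite I" and H: "\<And>i. i \<in> I \<Longrightarrow> cf (y1 i) (y2 i) (x i)"
  shows "cf (\<lambda>b. \<Sum>i\<in>I. c i * y1 i b) (\<lambda>b. \<Sum>i\<in>I. c i * y2 i b) (\<lambda>e. \<Sum>i\<in>I. c i * x i e)"
  unfolding cf_def
proof (intro conjI allI impI ballI)
  fix b assume "b < k1" thus "(\<Sum>i\<in>I. c i * x i (out1 b)) = (\<Sum>i\<in>I. c i * y1 i b)"
    using H unfolding cf_def by simp
next
  fix b assume "b < k2" thus "(\<Sum>i\<in>I. c i * x i (out2 b)) = (\<Sum>i\<in>I. c i * y2 i b)"
    using H unfolding cf_def by simp
next
  fix e assume eE: "e \<in> E" and n: "tailv e \<noteq> s1 \<and> tailv e \<noteq> s2"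
  have "(\<Sum>i\<in>I. c i * x i e) = (\<Sum>i\<in>I. c i * (\<Sum>e' \<in> in_edges E headv (tailv e). beta e' e * x i e'))"
    by (rule sum.cong[OF refl]) (use H eE n in \<open>simp add: cf_def\<close>)
  also have "\<dots> = (\<Sum>i\<in>I. \<Sum>e' \<in> in_edges E headv (tailv e). c i * (beta e' e * x i e'))"
    by (simp add: sum_distrib_left)
  also have "\<dots> = (\<Sum>e' \<in> in_edges E headv (tailv e). \<Sum>i\<in>I. c i * (beta e' e * x i e'))"
    by (rule sum.swap)
  also have "\<dots> = (\<Sum>e' \<in> in_edges E headv (tailv e). beta e' e * (\<Sum>i\<in>I. c i * x i e'))"
    by (simp add: sum_distrib_left mult.left_commute)
  finally show "(\<Sum>i\<in>I. c i * x i e) = (\<Sum>e' \<in> in_edges E headv (tailv e). beta e' e * (\<Sum>i\<in>I. c i * x i e'))" .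
next
  fix e assume "e \<notin> E" thus "(\<Sum>i\<in>I. c i * x i e) = 0" using H unfolding cf_def by simp
qed


definition es :: "'a vec \<Rightarrow> 'a vec \<Rightarrow> 'e \<Rightarrow> 'a" where
  "es Y1 Y2 = edge_symbols E tailv headv s1 s2 out1 out2 beta Y1 Y2"

lemma es_cf:
  assumes "dim_vec Y1 = k1" "dim_vec Y2 = k2"
  shows "cf (\<lambda>b. Y1 $ b) (\<lambda>b. Y2 $ b) (es Y1 Y2)"
proof -
  have "\<exists>!x. consistent_flow E tailv headv s1 s2 out1 out2 beta Y1 Y2 x"
    unfolding consistent_cf[OF assms]
    using cf_exists cf_unique by blast
  hence "consistent_flow E tailv headv s1 s2 out1 out2 beta Y1 Y2 (es Y1 Y2)"
    unfolding es_def edge_symbols_def by (rule theI')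
  thus ?thesis unfolding consistent_cf[OF assms] .
qed

lemma obs_lin:
  assumes Y1: "Y1 \<in> carrier_vec k1" and Y2: "Y2 \<in> carrier_vec k2"
  shows "terminal_obs E tailv headv s1 s2 out1 out2 beta inn n Y1 Y2 =
    transfer1 E tailv headv s1 s2 out1 out2 k1 k2 beta inn n *\<^sub>v Y1 +
    transfer2 E tailv headv s1 s2 out1 out2 k1 k2 beta inn n *\<^sub>v Y2"
proof -
  define F1 where "F1 b = es (unit_vec k1 b) (0\<^sub>v k2)" for b
  define F2 where "F2 b = es (0\<^sub>v k1) (unit_vec k2 b)" for b
  have c1: "cf (\<lambda>b'. \<Sum>b<k1. Y1 $ b * unit_vec k1 b $ b') (\<lambda>b'. \<Sum>b<k1. Y1 $ b * 0\<^sub>v k2 $ b')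
      (\<lambda>e. \<Sum>b<k1. Y1 $ b * F1 b e)"
    by (rule cf_sum) (simp_all add: F1_def es_cf)
  have c2: "cf (\<lambda>b'. \<Sum>b<k2. Y2 $ b * 0\<^sub>v k1 $ b') (\<lambda>b'. \<Sum>b<k2. Y2 $ b * unit_vec k2 b $ b')
      (\<lambda>e. \<Sum>b<k2. Y2 $ b * F2 b e)"
    by (rule cf_sum) (simp_all add: F2_def es_cf)
  have c: "cf (\<lambda>b. Y1 $ b) (\<lambda>b. Y2 $ b) (\<lambda>e. (\<Sum>b<k1. Y1 $ b * F1 b e) + (\<Sum>b<k2. Y2 $ b * F2 b e))"
  proof -
    have cc: "cf (\<lambda>b'. (\<Sum>b<k1. Y1 $ b * unit_vec k1 b $ b') + (\<Sum>b<k2. Y2 $ b * 0\<^sub>v k1 $ b'))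
        (\<lambda>b'. (\<Sum>b<k1. Y1 $ b * 0\<^sub>v k2 $ b') + (\<Sum>b<k2. Y2 $ b * unit_vec k2 b $ b'))
        (\<lambda>e. (\<Sum>b<k1. Y1 $ b * F1 b e) + (\<Sum>b<k2. Y2 $ b * F2 b e))"
      by (rule cf_add[OF c1 c2])
    have e1: "(\<Sum>b<k1. Y1 $ b * unit_vec k1 b $ b') + (\<Sum>b<k2. Y2 $ b * 0\<^sub>v k1 $ b') = Y1 $ b'"
      if "b' < k1" for b'
    proof -
      have "(\<Sum>b<k1. Y1 $ b * unit_vec k1 b $ b') = (\<Sum>b<k1. if b = b' then Y1 $ b else 0)"
        by (rule sum.cong[OF refl]) (use that in \<open>auto simp: unit_vec_def\<close>)
      also have "\<dots> = Y1 $ b'" using that by simp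
      finally show ?thesis using that by simp
    qed
    have e2: "(\<Sum>b<k1. Y1 $ b * 0\<^sub>v k2 $ b') + (\<Sum>b<k2. Y2 $ b * unit_vec k2 b $ b') = Y2 $ b'"
      if "b' < k2" for b'
    proof -
      have "(\<Sum>b<k2. Y2 $ b * unit_vec k2 b $ b') = (\<Sum>b<k2. if b = b' then Y2 $ b else 0)"
        by (rule sum.cong[OF refl]) (use that in \<open>auto simp: unit_vec_def\<close>)
      also have "\<dots> = Y2 $ b'" using that by simp
      finally show ?thesis using that by simp
    qed
    show ?thesis using cc cf_cong[of "\<lambda>b'. (\<Sum>b<k1. Y1 $ b * unit_vec k1 b $ b') + (\<Sum>b<k2. Y2 $ b * 0\<^sub>v k1 $ b')"
       "\<lambda>b. Y1 $ b" "\<lambda>b'. (\<Sum>b<k1. Y1 $ b * 0\<^sub>v k2 $ b') + (\<Sum>b<k2. Y2 $ b * unit_vec k2 b $ b')" "\<lambda>b. Y2 $ b"]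
      e1 e2 by simp
  qed
  have esY: "es Y1 Y2 = (\<lambda>e. (\<Sum>b<k1. Y1 $ b * F1 b e) + (\<Sum>b<k2. Y2 $ b * F2 b e))"
    by (rule cf_unique[OF es_cf c]) (use Y1 Y2 in auto)
  show ?thesis
  proof (rule eq_vecI)
    fix a assume "a < dim_vec (transfer1 E tailv headv s1 s2 out1 out2 k1 k2 beta inn n *\<^sub>v Y1 +
      transfer2 E tailv headv s1 s2 out1 out2 k1 k2 beta inn n *\<^sub>v Y2)"
    hence a: "a < n" by (simp add: transfer1_def transfer2_def)
    have t1: "(transfer1 E tailv headv s1 s2 out1 out2 k1 k2 beta inn n *\<^sub>v Y1) $ a = (\<Sum>b<k1. Y1 $ b * F1 b (inn a))"
    proof -
      let ?T = "transfer1 E tailv headv s1 s2 out1 out2 k1 k2 beta inn n"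
      have dr: "dim_row ?T = n" "dim_col ?T = k1" by (simp_all add: transfer1_def)
      have "(?T *\<^sub>v Y1) $ a = row ?T a \<bullet> Y1" using a dr by simp
      also have "\<dots> = (\<Sum>i\<in>{0..<k1}. row ?T a $ i * Y1 $ i)" unfolding scalar_prod_def using Y1 by simp
      also have "\<dots> = (\<Sum>i\<in>{0..<k1}. Y1 $ i * F1 i (inn a))"
      proof (rule sum.cong[OF refl])
        fix i assume "i \<in> {0..<k1}"
        hence i: "i < k1" by simp
        have "row ?T a $ i = ?T $$ (a, i)" using i a dr by simp
        also have "\<dots> = F1 i (inn a)" using i a by (simp add: transfer1_def terminal_obs_def F1_def es_def)
        finally show "row ?T a $ i * Y1 $ i = Y1 $ i * F1 i (inn a)" by (simp add: mult.commute)
      qed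
      finally show ?thesis by (simp add: lessThan_atLeast0)
    qed
    have t2: "(transfer2 E tailv headv s1 s2 out1 out2 k1 k2 beta inn n *\<^sub>v Y2) $ a = (\<Sum>b<k2. Y2 $ b * F2 b (inn a))"
    proof -
      let ?T = "transfer2 E tailv headv s1 s2 out1 out2 k1 k2 beta inn n"
      have dr: "dim_row ?T = n" "dim_col ?T = k2" by (simp_all add: transfer2_def)
      have "(?T *\<^sub>v Y2) $ a = row ?T a \<bullet> Y2" using a dr by simp
      also have "\<dots> = (\<Sum>i\<in>{0..<k2}. row ?T a $ i * Y2 $ i)" unfolding scalar_prod_def using Y2 by simp
      also have "\<dots> = (\<Sum>i\<in>{0..<k2}. Y2 $ i * F2 i (inn a))"
      proof (rule sum.cong[OF refl])
        fix i assume "i \<in> {0..<k2}"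
        hence i: "i < k2" by simp
        have "row ?T a $ i = ?T $$ (a, i)" using i a dr by simp
        also have "\<dots> = F2 i (inn a)" using i a by (simp add: transfer2_def terminal_obs_def F2_def es_def)
        finally show "row ?T a $ i * Y2 $ i = Y2 $ i * F2 i (inn a)" by (simp add: mult.commute)
      qed
      finally show ?thesis by (simp add: lessThan_atLeast0)
    qed
    show "terminal_obs E tailv headv s1 s2 out1 out2 beta inn n Y1 Y2 $ a =
      (transfer1 E tailv headv s1 s2 out1 out2 k1 k2 beta inn n *\<^sub>v Y1 +
       transfer2 E tailv headv s1 s2 out1 out2 k1 k2 beta inn n *\<^sub>v Y2) $ a"
      using a t1 t2 esY by (simp add: terminal_obs_def es_def transfer1_def transfer2_def)
  qed (simp add: terminal_obs_def transfer1_def transfer2_def)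
qed

end

theorem corollary1:
  fixes E :: "'e set" and tailv headv :: "'e \<Rightarrow> 'v" and s1 s2 t1 t2 :: 'v
    and out1 out2 in1 in2 :: "nat \<Rightarrow> 'e"
    and beta :: "'e \<Rightarrow> 'e \<Rightarrow> 'a::{field,finite}"
    and M1 M2 :: "'a mat"
  defines "k1_2 \<equiv> mincut E tailv headv {s1} {t2}"
    and "k2_1 \<equiv> mincut E tailv headv {s2} {t1}"
    and "k1_1 \<equiv> mincut E tailv headv {s1} {t1}"
    and "k2_2 \<equiv> mincut E tailv headv {s2} {t2}"
    and "k12_1 \<equiv> mincut E tailv headv {s1, s2} {t1}"
    and "k12_2 \<equiv> mincut E tailv headv {s1, s2} {t2}"
    and "k1_12 \<equiv> mincut E tailv headv {s1} {t1, t2}"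
    and "k2_12 \<equiv> mincut E tailv headv {s2} {t1, t2}"
  defines "H11 \<equiv> transfer1 E tailv headv s1 s2 out1 out2 k1_12 k2_12 beta in1 k12_1"
    and "H12 \<equiv> transfer2 E tailv headv s1 s2 out1 out2 k1_12 k2_12 beta in1 k12_1"
    and "H21 \<equiv> transfer1 E tailv headv s1 s2 out1 out2 k1_12 k2_12 beta in2 k12_2"
    and "H22 \<equiv> transfer2 E tailv headv s1 s2 out1 out2 k1_12 k2_12 beta in2 k12_2"
  defines "R2ss \<equiv> k2_1"
    and "R1ss \<equiv> min k12_1 k12_2 - k2_1"
  assumes net: "two_unicast_network E tailv headv s1 s2 t1 t2"
    and enum_out1: "bij_betw out1 {..<k1_12} (out_edges E tailv s1)"
    and enum_out2: "bij_betw out2 {..<k2_12} (out_edges E tailv s2)"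
    and enum_in1: "bij_betw in1 {..<k12_1} (in_edges E headv t1)"
    and enum_in2: "bij_betw in2 {..<k12_2} (in_edges E headv t2)"
    and cond1: "k1_2 + k2_1 \<ge> min k12_1 k12_2"
    and cond2: "k2_1 \<le> k2_2"
    and rH11: "mrank H11 = k1_1" and rH12: "mrank H12 = k2_1"
    and rH21: "mrank H21 = k1_2" and rH22: "mrank H22 = k2_2"
    and rH1: "mrank (hcat H11 H12) = k12_1"
    and rH2: "mrank (hcat H21 H22) = k12_2"
    and M1: "M1 \<in> carrier_mat k1_12 R1ss" and rM1: "mrank M1 = R1ss"
    and M2: "M2 \<in> carrier_mat k2_12 R2ss" and rM2: "mrank M2 = R2ss"
    and rHM1: "mrank (hcat (H11 * M1) (H12 * M2)) = R1ss + R2ss"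
    and rHM2: "mrank (hcat (H21 * M1) (H22 * M2)) = R1ss + R2ss"
  shows "\<forall>R1 R2 :: nat. R1 \<le> min k12_1 k12_2 - k2_1 \<and> R2 \<le> k2_2 \<and>
           R1 + R2 \<le> mrank (hcat (H21 * M1) H22) \<longrightarrow>
           achievable_over TYPE('a) E tailv headv s1 s2 t1 t2 out1 out2 in1 in2 R1 R2"
proof (intro allI impI)
  fix R1 R2 :: nat
  assume RR: "R1 \<le> min k12_1 k12_2 - k2_1 \<and> R2 \<le> k2_2 \<and> R1 + R2 \<le> mrank (hcat (H21 * M1) H22)"
  have finE: "finite E" and acyc: "acyclic (edge_rel E tailv headv)" and s12: "s1 \<noteq> s2"
    and co1: "card (out_edges E tailv s1) = k1_12" and co2: "card (out_edges E tailv s2) = k2_12"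
    and ci1: "card (in_edges E headv t1) = k12_1" and ci2: "card (in_edges E headv t2) = k12_2"
    using net unfolding two_unicast_network_def k1_12_def k2_12_def k12_1_def k12_2_def by auto
  interpret N: netw E tailv headv s1 s2 out1 out2 k1_12 k2_12 beta
    by unfold_locales (use finE acyc s12 enum_out1 enum_out2 in auto)
  have cH11: "H11 \<in> carrier_mat k12_1 k1_12" unfolding H11_def transfer1_def by simp
  have cH12: "H12 \<in> carrier_mat k12_1 k2_12" unfolding H12_def transfer2_def by simp
  have cH21: "H21 \<in> carrier_mat k12_2 k1_12" unfolding H21_def transfer1_def by simp
  have cH22: "H22 \<in> carrier_mat k12_2 k2_12" unfolding H22_def transfer2_def by simp
  have rH12': "mrank H12 = R2ss" using rH12 unfolding R2ss_def .
  have R1b: "R1 \<le> R1ss" using RR unfolding R1ss_def by simp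
  obtain M1' M2' where M1': "M1' \<in> carrier_mat k1_12 R1" and M2': "M2' \<in> carrier_mat k2_12 R2"
    and dec: "\<forall>U1 U1' U2 U2'. U1 \<in> carrier_vec R1 \<longrightarrow> U1' \<in> carrier_vec R1 \<longrightarrow>
        U2 \<in> carrier_vec R2 \<longrightarrow> U2' \<in> carrier_vec R2 \<longrightarrow>
      (H11 *\<^sub>v (M1' *\<^sub>v U1) + H12 *\<^sub>v (M2' *\<^sub>v U2) = H11 *\<^sub>v (M1' *\<^sub>v U1') + H12 *\<^sub>v (M2' *\<^sub>v U2')
         \<longrightarrow> U1 = U1') \<and>
      (H21 *\<^sub>v (M1' *\<^sub>v U1) + H22 *\<^sub>v (M2' *\<^sub>v U2) = H21 *\<^sub>v (M1' *\<^sub>v U1') + H22 *\<^sub>v (M2' *\<^sub>v U2')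
         \<longrightarrow> U2 = U2')"
    using la_main[OF cH11 cH12 cH21 cH22 M1 M2 rH12' rH22 rHM1 rHM2 R1b] RR by blast
  have obs1: "terminal_obs E tailv headv s1 s2 out1 out2 beta in1 k12_1 (M1' *\<^sub>v U1) (M2' *\<^sub>v U2) =
      H11 *\<^sub>v (M1' *\<^sub>v U1) + H12 *\<^sub>v (M2' *\<^sub>v U2)" for U1 U2
    unfolding H11_def H12_def proof (rule N.obs_lin)
      show "M1' *\<^sub>v U1 \<in> carrier_vec k1_12" using M1' by (intro carrier_vecI) simp
      show "M2' *\<^sub>v U2 \<in> carrier_vec k2_12" using M2' by (intro carrier_vecI) simp
    qed
  have obs2: "terminal_obs E tailv headv s1 s2 out1 out2 beta in2 k12_2 (M1' *\<^sub>v U1) (M2' *\<^sub>v U2) =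
      H21 *\<^sub>v (M1' *\<^sub>v U1) + H22 *\<^sub>v (M2' *\<^sub>v U2)" for U1 U2
    unfolding H21_def H22_def proof (rule N.obs_lin)
      show "M1' *\<^sub>v U1 \<in> carrier_vec k1_12" using M1' by (intro carrier_vecI) simp
      show "M2' *\<^sub>v U2 \<in> carrier_vec k2_12" using M2' by (intro carrier_vecI) simp
    qed
  have D: "\<forall>U1 U1' U2 U2'. U1 \<in> carrier_vec R1 \<longrightarrow> U1' \<in> carrier_vec R1 \<longrightarrow>
        U2 \<in> carrier_vec R2 \<longrightarrow> U2' \<in> carrier_vec R2 \<longrightarrow>
      (terminal_obs E tailv headv s1 s2 out1 out2 beta in1 k12_1 (M1' *\<^sub>v U1) (M2' *\<^sub>v U2) =
       terminal_obs E tailv headv s1 s2 out1 out2 beta in1 k12_1 (M1' *\<^sub>v U1') (M2' *\<^sub>v U2')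
         \<longrightarrow> U1 = U1') \<and>
      (terminal_obs E tailv headv s1 s2 out1 out2 beta in2 k12_2 (M1' *\<^sub>v U1) (M2' *\<^sub>v U2) =
       terminal_obs E tailv headv s1 s2 out1 out2 beta in2 k12_2 (M1' *\<^sub>v U1') (M2' *\<^sub>v U2')
         \<longrightarrow> U2 = U2')"
    unfolding obs1 obs2 by (rule dec)
  show "achievable_over TYPE('a) E tailv headv s1 s2 t1 t2 out1 out2 in1 in2 R1 R2"
    unfolding achievable_over_def Let_def co1 co2 ci1 ci2
    by (rule exI[of _ beta], rule exI[of _ M1'], rule exI[of _ M2'], intro conjI M1' M2' D)
qed

end
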